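(* Let $0<\alpha<1$, $b>0$, $c>0$ with $L=b+c<1$, and define for integers $\gamma\ge 1$ $$S_{inf}(\gamma)=\frac{1-\alpha^{\gamma+1}}{(1+\gamma L)(1-\alpha)}.$$ Let $$\gamma_0=\frac{1}{\ln\alpha}\left[W_{-1}\!\left(-\frac{1}{e}\,\alpha^{\frac{1}{L}-1}\right)+1\right]-\frac{1}{L},$$ where $W_{-1}$ is the $-1$ branch of the Lambert $W$ function (the inverse of $w\mapsto we^{w}$ on $(-\infty,-1]$). Then a maximizer $\gamma^*$ of $S_{inf}$ over integers $\gamma\ge 1$ satisfies: if $\gamma_0>1$, then $\gamma^*\in\{\lfloor\gamma_0\rfloor,\lceil\gamma_0\rceil\}$; otherwise $\gamma^*=1$.
   Context: $S_{inf}(\gamma)$ is the speedup ratio of distributed speculative decoding with draft length $\gamma$, acceptance rate $\alpha$, and $L$ the per-draft-token cost (SLM inference plus uplink transmission of the draft distribution) relative to one LLM run. Note that $L<1$ ensures the argument $-\frac1e\alpha^{1/L-1}$ lies in $(-1/e,0)$, where $W_{-1}$ is real-valued. *)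

theory Defs
  imports Complex_Main
begin

text \<open>The -1 branch of the Lambert W function: the inverse of w \<mapsto> w e^w on (-\<infinity>,-1].
  Meaningful for y in [-1/e, 0).\<close>
definition lambert_W_m1 :: "real \<Rightarrow> real" where
  "lambert_W_m1 y = (THE w. w \<le> -1 \<and> w * exp w = y)"

definition S_inf :: "real \<Rightarrow> real \<Rightarrow> nat \<Rightarrow> real" where
  "S_inf \<alpha> L \<gamma> = (1 - \<alpha> ^ (\<gamma> + 1)) / ((1 + real \<gamma> * L) * (1 - \<alpha>))"

definition gamma0 :: "real \<Rightarrow> real \<Rightarrow> real" where
  "gamma0 \<alpha> L = (1 / ln \<alpha>) * (lambert_W_m1 (- (1 / exp 1) * \<alpha> powr (1 / L - 1)) + 1) - 1 / L"

end

theory Submission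
  imports Defs
begin

lemma wexp_decr:
  fixes u v :: real
  assumes "u < v" "v \<le> -1"
  shows "v * exp v < u * exp u"
proof -
  have "(\<lambda>w. w * exp w) v < (\<lambda>w. w * exp w) u"
  proof (rule DERIV_neg_imp_decreasing_open[OF assms(1)])
    fix x assume x: "u < x" "x < v"
    show "\<exists>y. DERIV (\<lambda>w. w * exp w) x :> y \<and> y < 0"
    proof (intro exI conjI)
      show "DERIV (\<lambda>w. w * exp w) x :> (1 + x) * exp x"
        by (auto intro!: derivative_eq_intros simp: algebra_simps)
      have "1 + x < 0" using assms x by linarith
      then show "(1 + x) * exp x < 0"
        by (simp add: mult_neg_pos)
    qed
  next
    show "continuous_on {u..v} (\<lambda>w. w * exp w)"
      by (intro continuous_intros)
  qed
  then show ?thesis by simp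
qed

lemma W_eq:
  assumes "w \<le> -1" "w * exp w = y"
  shows "lambert_W_m1 y = w"
  unfolding lambert_W_m1_def
proof (rule the_equality)
  show "w \<le> -1 \<and> w * exp w = y" using assms by simp
  fix v assume v: "v \<le> -1 \<and> v * exp v = y"
  show "v = w"
  proof (rule ccontr)
    assume "v \<noteq> w"
    then have "v < w \<or> w < v" by linarith
    then show False using wexp_decr[of v w] wexp_decr[of w v] v assms by auto
  qed
qed


definition NN :: "real \<Rightarrow> real \<Rightarrow> real \<Rightarrow> real" where
  "NN a L x = exp ((x+1)*a) * (L - a*(1+x*L)) - L"

definition FF :: "real \<Rightarrow> real \<Rightarrow> real \<Rightarrow> real" where
  "FF a L x = (1 - exp ((x+1)*a)) / (1+x*L)"

lemma NN_deriv: "DERIV (NN a L) x :> -(exp ((x+1)*a) * a^2 * (1+x*L))"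
  unfolding NN_def
  by (auto intro!: derivative_eq_intros simp: algebra_simps power2_eq_square)

lemma FF_deriv: assumes "1 + x*L \<noteq> 0"
  shows "DERIV (FF a L) x :> NN a L x / (1+x*L)^2"
  unfolding FF_def NN_def using assms
  by (auto intro!: derivative_eq_intros simp: algebra_simps power2_eq_square divide_simps)

lemma NN_decr:
  assumes "a < 0" "0 < L" "-1/L < u" "u < v"
  shows "NN a L v < NN a L u"
proof (rule DERIV_neg_imp_decreasing[OF assms(4)])
  fix x assume x: "u \<le> x" "x \<le> v"
  have "-1/L < x" using assms x by linarith
  then have "-1 < x * L" using assms by (simp add: field_simps)
  then have p: "0 < 1 + x*L" by linarith
  show "\<exists>y. DERIV (NN a L) x :> y \<and> y < 0"
  proof (intro exI conjI, rule NN_deriv)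
    have "0 < exp ((x+1)*a) * a^2 * (1+x*L)" using p assms by simp
    then show "-(exp ((x+1)*a) * a^2 * (1+x*L)) < 0" by linarith
  qed
qed

lemma NN_start:
  assumes "a < 0" "0 < L" "L < 1"
  shows "NN a L (-1/L) > 0"
proof -
  have "1/L > 1" using assms by simp
  then have "(-1/L + 1) * a > 0" using assms by (simp add: mult_neg_neg)
  then have "exp ((-1/L + 1) * a) > 1" by simp
  then have "L * exp ((-1/L + 1) * a) > L * 1" using assms by simp
  moreover have "1 + (-1/L) * L = 0" using assms by simp
  ultimately show ?thesis unfolding NN_def by (simp add: algebra_simps)
qed

lemma NN_neg:
  assumes "a < 0" "0 < L" "L < 1"
  shows "\<exists>X>0. NN a L X < 0"
proof -
  define q where "q = -a"
  have q: "q > 0" using assms q_def by simp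
  define X where "X = 4*(1+q)/(q^2*L)"
  have X: "X > 0" using q assms X_def by simp
  define s where "s = q*(X+1)"
  have s: "s > 0" using q X s_def by simp
  have e1: "exp (s/2) > s/2" using exp_ge_add_one_self[of "s/2"] by linarith
  have "exp s = exp (s/2) * exp (s/2)" by (simp flip: exp_add)
  also have "\<dots> > (s/2)*(s/2)" using e1 s by (intro mult_strict_mono) auto
  finally have es: "exp s > s^2/4" by (simp add: power2_eq_square)
  have "s^2/4 = q^2*(X+1)*(X+1)/4" by (simp add: s_def power2_eq_square)
  also have "\<dots> > q^2*(X+1)*X/4" using q X by (simp add: mult_strict_left_mono)
  also have "q^2*(X+1)*X/4 = (X+1)*(1+q)/L" using q assms by (simp add: X_def field_simps power2_eq_square)
  finally have h1: "s^2/4 > (X+1)*(1+q)/L" .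
  have "exp s * L > s^2/4 * L" using es assms by simp
  moreover have "s^2/4 * L > (X+1)*(1+q)" using h1 assms by (simp add: field_simps)
  ultimately have "exp s * L > (X+1)*(1+q)" by linarith
  moreover have "(X+1)*(1+q) \<ge> L + q*(1+X*L)"
  proof -
    have "X*L \<le> X" using X assms by simp
    then have f1: "q*(X*L) \<le> q*X" using q by (simp add: mult_left_mono)
    have f2: "(X+1)*(1+q) = X + q*X + 1 + q" by (simp add: algebra_simps)
    have f3: "L + q*(1+X*L) = L + q + q*(X*L)" by (simp add: algebra_simps)
    have "L + q + q*(X*L) \<le> X + q*X + 1 + q" using f1 assms X by linarith
    then show ?thesis by (simp only: f2 f3)
  qed
  ultimately have lt: "L + q*(1+X*L) < exp s * L" by linarith
  have "(X+1)*a = -s" by (simp add: s_def q_def)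
  then have "exp ((X+1)*a) = inverse (exp s)" by (simp add: exp_minus)
  then have "NN a L X = (L + q*(1+X*L)) / exp s - L"
    unfolding NN_def q_def by (simp add: divide_inverse algebra_simps)
  also have "\<dots> < 0" using lt by (simp add: divide_simps mult.commute)
  finally show ?thesis using X by blast
qed


lemma NN_root:
  assumes "a < 0" "0 < L" "L < 1"
  obtains x0 where "x0 > -1/L" "NN a L x0 = 0"
proof -
  obtain X where X: "X > 0" "NN a L X < 0" using NN_neg[OF assms] by blast
  have "-1/L < 0" using assms by simp
  then have le: "-1/L \<le> X" using X by linarith
  have cont: "continuous_on {-1/L..X} (NN a L)"
    unfolding NN_def by (intro continuous_intros)
  obtain x where x: "x \<ge> -1/L" "x \<le> X" "NN a L x = 0"
    using IVT2'[of "NN a L" X 0 "-1/L", OF _ _ le cont] X NN_start[OF assms] by auto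
  have "x \<noteq> -1/L" using x NN_start[OF assms] by auto
  with x have "x > -1/L" by linarith
  with x show ?thesis using that by blast
qed

lemma pos_den: fixes L x :: real assumes "0 < L" "-1/L < x" shows "0 < 1 + x*L"
proof -
  have "(-1/L) * L < x * L" using assms by (intro mult_strict_right_mono) auto
  then have "-1 < x * L" using assms by simp
  then show ?thesis by linarith
qed

lemma FF_cont: fixes L u v :: real assumes "0 < L" "-1/L < u" shows "continuous_on {u..v} (FF a L)"
proof -
  have "\<forall>x\<in>{u..v}. isCont (FF a L) x"
  proof
    fix x assume "x \<in> {u..v}"
    then have "0 < 1 + x*L" using pos_den[of L x] assms by auto
    then show "isCont (FF a L) x" using FF_deriv[of x L a] DERIV_isCont by auto
  qed
  then show ?thesis by (simp add: continuous_at_imp_continuous_on)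
qed

lemma FF_incr:
  assumes "a < 0" "0 < L" "-1/L < u" "u < v" "v \<le> x0" "NN a L x0 = 0"
  shows "FF a L u < FF a L v"
proof (rule DERIV_pos_imp_increasing_open[OF assms(4)])
  fix x assume x: "u < x" "x < v"
  have p: "0 < 1 + x*L" using pos_den[of L x] assms x by auto
  have "NN a L x0 < NN a L x" using NN_decr[of a L x x0] assms x by auto
  then have "NN a L x / (1+x*L)^2 > 0" using p assms by simp
  then show "\<exists>y. DERIV (FF a L) x :> y \<and> 0 < y" using FF_deriv[of x L a] p by auto
next
  show "continuous_on {u..v} (FF a L)" using FF_cont assms by blast
qed

lemma FF_decr:
  assumes "a < 0" "0 < L" "-1/L < x0" "x0 \<le> u" "u < v" "NN a L x0 = 0"
  shows "FF a L v < FF a L u"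
proof (rule DERIV_neg_imp_decreasing_open[OF assms(5)])
  fix x assume x: "u < x" "x < v"
  have p: "0 < 1 + x*L" using pos_den[of L x] assms x by auto
  have "NN a L x < NN a L x0" using NN_decr[of a L x0 x] assms x by auto
  then have "NN a L x / (1+x*L)^2 < 0" using p assms by (simp add: divide_neg_pos)
  then show "\<exists>y. DERIV (FF a L) x :> y \<and> y < 0" using FF_deriv[of x L a] p by auto
next
  show "continuous_on {u..v} (FF a L)" using FF_cont assms by auto
qed


lemma gamma0_eq:
  assumes "0 < \<alpha>" "\<alpha> < 1" "0 < L" "L < 1" "x0 > -1/L" "NN (ln \<alpha>) L x0 = 0"
  shows "gamma0 \<alpha> L = x0"
proof -
  define a where "a = ln \<alpha>"
  have a: "a < 0" using assms a_def by simp
  define w where "w = (x0 + 1/L)*a - 1"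
  have t: "x0 + 1/L > 0" using assms by linarith
  have "(x0 + 1/L)*a < 0" using t a by (simp add: mult_pos_neg)
  then have w1: "w \<le> -1" unfolding w_def by linarith
  have N0: "exp ((x0+1)*a) * (L - a*(1+x0*L)) = L" using assms(6) unfolding NN_def a_def by simp
  have pw: "\<alpha> powr (1/L - 1) = exp ((1/L - 1)*a)" using assms by (simp add: powr_def a_def)
  have ex: "exp w = exp ((x0+1)*a) * exp ((1/L - 1)*a) / exp 1"
  proof -
    have "w = ((x0+1)*a + (1/L - 1)*a) - 1" by (simp add: w_def algebra_simps)
    then show ?thesis by (simp only: exp_diff exp_add)
  qed
  have wL: "w = -(L - a*(1+x0*L))/L" using assms(3) unfolding w_def by (simp add: field_simps)
  have "w * exp w = -(exp ((x0+1)*a) * (L - a*(1+x0*L))) / L * exp ((1/L - 1)*a) / exp 1"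
    by (simp only: ex) (simp only: wL, simp add: field_simps)
  also have "\<dots> = - (1 / exp 1) * \<alpha> powr (1 / L - 1)"
    using N0 pw assms(3) by simp
  finally have "lambert_W_m1 (- (1 / exp 1) * \<alpha> powr (1 / L - 1)) = w"
    using W_eq w1 by blast
  then have "gamma0 \<alpha> L = (1/a) * (w + 1) - 1/L" unfolding gamma0_def a_def by simp
  also have "\<dots> = x0" unfolding w_def using a by (simp add: field_simps)
  finally show ?thesis .
qed

lemma S_FF:
  assumes "0 < \<alpha>"
  shows "S_inf \<alpha> L n = FF (ln \<alpha>) L (real n) / (1 - \<alpha>)"
proof -
  have "exp ((real n + 1) * ln \<alpha>) = exp (real (n+1) * ln \<alpha>)" by simp
  also have "\<dots> = exp (ln \<alpha>) ^ (n+1)" by (rule exp_of_nat_mult)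
  also have "\<dots> = \<alpha> ^ (n+1)" using assms by simp
  finally have "exp ((real n + 1) * ln \<alpha>) = \<alpha> ^ (n+1)" .
  then show ?thesis unfolding S_inf_def FF_def by (simp add: field_simps add.commute)
qed

theorem theorem2:
  fixes \<alpha> b c L :: real and \<gamma>s :: nat
  assumes "0 < \<alpha>" "\<alpha> < 1" "0 < b" "0 < c" "L = b + c" "L < 1"
    and "\<gamma>s \<ge> 1"
    and "\<forall>\<gamma>::nat. \<gamma> \<ge> 1 \<longrightarrow> S_inf \<alpha> L \<gamma> \<le> S_inf \<alpha> L \<gamma>s"
  shows "(gamma0 \<alpha> L > 1 \<longrightarrow> int \<gamma>s \<in> {\<lfloor>gamma0 \<alpha> L\<rfloor>, \<lceil>gamma0 \<alpha> L\<rceil>})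
       \<and> (\<not> gamma0 \<alpha> L > 1 \<longrightarrow> \<gamma>s = 1)"
proof -
  define a where "a = ln \<alpha>"
  have a: "a < 0" using assms a_def by simp
  have L: "0 < L" "L < 1" using assms by auto
  obtain x0 where x0: "x0 > -1/L" "NN a L x0 = 0" using NN_root[OF a L] by blast
  have g: "gamma0 \<alpha> L = x0" using gamma0_eq[of \<alpha> L x0] assms x0 L a_def by simp
  have neg: "-1/L < 0" using L by simp
  have S: "\<And>n. S_inf \<alpha> L n = FF a L (real n) / (1 - \<alpha>)" using S_FF assms(1) a_def by simp
  have ap: "0 < 1 - \<alpha>" using assms by simp
  have less: "S_inf \<alpha> L m < S_inf \<alpha> L n" if "FF a L (real m) < FF a L (real n)" for m n
    unfolding S using that ap by (simp add: divide_strict_right_mono)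
  have max: "\<not> S_inf \<alpha> L \<gamma>s < S_inf \<alpha> L n" if "n \<ge> 1" for n
    using assms(8) that by (simp add: not_less)
  show ?thesis
  proof (intro conjI impI)
    assume g1: "1 < gamma0 \<alpha> L"
    show "int \<gamma>s \<in> {\<lfloor>gamma0 \<alpha> L\<rfloor>, \<lceil>gamma0 \<alpha> L\<rceil>}"
    proof (rule ccontr)
      assume nin: "int \<gamma>s \<notin> {\<lfloor>gamma0 \<alpha> L\<rfloor>, \<lceil>gamma0 \<alpha> L\<rceil>}"
      have "int \<gamma>s < \<lfloor>x0\<rfloor> \<or> int \<gamma>s > \<lceil>x0\<rceil>"
      proof (rule ccontr)
        assume "\<not> ?thesis"
        then have h: "\<lfloor>x0\<rfloor> \<le> int \<gamma>s" "int \<gamma>s \<le> \<lceil>x0\<rceil>" by auto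
        have "\<lceil>x0\<rceil> \<le> \<lfloor>x0\<rfloor> + 1" unfolding ceiling_le_iff by linarith
        then show False using h nin g by auto
      qed
      then show False
      proof
        assume lt: "int \<gamma>s < \<lfloor>x0\<rfloor>"
        define n where "n = nat \<lfloor>x0\<rfloor>"
        have fl1: "\<lfloor>x0\<rfloor> \<ge> 1" using g1 g by (simp add: le_floor_iff)
        have rn: "real n = of_int \<lfloor>x0\<rfloor>" using fl1 n_def by simp
        have "real \<gamma>s < real n" using lt rn by linarith
        moreover have "real n \<le> x0" using rn by simp
        moreover have "-1/L < real \<gamma>s" using neg by (meson less_le_trans of_nat_0_le_iff)
        ultimately have "FF a L (real \<gamma>s) < FF a L (real n)" using FF_incr[OF a L(1)] x0 by blast
        moreover have "nat 1 \<le> n" unfolding n_def using fl1 by (rule nat_mono)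
        then have "n \<ge> 1" by simp
        ultimately show False using less max by blast
      next
        assume gt: "int \<gamma>s > \<lceil>x0\<rceil>"
        define n where "n = nat \<lceil>x0\<rceil>"
        have c1: "\<lceil>x0\<rceil> \<ge> 1" using g1 g by (simp add: le_ceiling_iff)
        have rn: "real n = of_int \<lceil>x0\<rceil>" using c1 n_def by simp
        have "real n < real \<gamma>s" using gt rn by linarith
        moreover have "x0 \<le> real n" using rn by simp
        ultimately have "FF a L (real \<gamma>s) < FF a L (real n)" using FF_decr[OF a L(1)] x0 by blast
        moreover have "nat 1 \<le> n" unfolding n_def using c1 by (rule nat_mono)
        then have "n \<ge> 1" by simp
        ultimately show False using less max by blast
      qed
    qed
  next
    assume g1: "\<not> 1 < gamma0 \<alpha> L"
    show "\<gamma>s = 1"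
    proof (rule ccontr)
      assume "\<gamma>s \<noteq> 1"
      then have "real 1 < real \<gamma>s" using assms(7) by simp
      moreover have "x0 \<le> real 1" using g1 g by simp
      ultimately have "FF a L (real \<gamma>s) < FF a L (real 1)" using FF_decr[OF a L(1)] x0 by blast
      then show False using less max by blast
    qed
  qed
qed

end
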